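(* Let $\mathbb{T}^2=\mathbb{C}^2/\Lambda$ be a two-dimensional complex torus with projection $\pi:\mathbb{C}^2\to\mathbb{T}^2$, and let $(X,\mathcal{L})$ be a minimal lamination by Riemann surfaces holomorphically embedded in $\mathbb{T}^2$. For $\epsilon\in\mathbb{C}$ let $\tau_{(0,\epsilon)}$ be the automorphism of $\mathbb{T}^2$ induced by the translation $(x_1,x_2)\mapsto(x_1,x_2+\epsilon)$ of $\mathbb{C}^2$. Suppose there is a sequence $\epsilon_n\to 0$, $\epsilon_n\neq 0$, such that $\tau_{(0,\epsilon_n)}(\mathcal{L})=\mathcal{L}$ for every $n$. Then either every point of $X$ is vertical, or $X$ has no vertical points.
   Context: A lamination by Riemann surfaces embedded in a complex surface is a compact set $X$ covered by flow boxes in which $X$ is a union of disjoint holomorphic discs (plaques) varying continuously in a transversal parameter; leaves are maximal connected unions of plaques. It is minimal if every leaf is dense in $X$. A point $p\in X$ is vertical if, lifting to $\mathbb{C}^2$ via $\pi$, the tangent line of the leaf at $p$ is $\{0\}\times\mathbb{C}$ (i.e. the unit tangent vector is $(0,1)$); it is horizontal if the tangent line is $\mathbb{C}\times\{0\}$. *)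

theory Defs
  imports "HOL-Analysis.Analysis"
begin

text \<open>We work on the universal cover C^2 = complex \<times> complex of the torus T^2 = C^2/Lambda.
A compact set X in T^2 is represented by its lift Xl = pi^{-1}(X), a closed Lambda-invariant set.
A lamination is represented by a Lambda-invariant family P of (lifted) plaques: holomorphic
injective immersions of the unit disc into C^2 with image in Xl, pairwise compatible
(they overlap in open sets), such that every point of Xl has a flow box whose plaques belong to P.\<close>

type_synonym c2 = "complex \<times> complex"

definition lattice :: "c2 set \<Rightarrow> bool" where
  "lattice \<Lambda> \<longleftrightarrow> 0 \<in> \<Lambda> \<and> (\<forall>a\<in>\<Lambda>. \<forall>b\<in>\<Lambda>. a + b \<in> \<Lambda> \<and> - a \<in> \<Lambda>)
     \<and> (\<exists>r>0. \<forall>a\<in>\<Lambda>. a \<noteq> 0 \<longrightarrow> r \<le> norm a)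
     \<and> span \<Lambda> = UNIV"

definition disc :: "complex set" where "disc = ball 0 1"

definition dvec :: "(complex \<Rightarrow> c2) \<Rightarrow> complex \<Rightarrow> c2" where
  "dvec f z = (deriv (\<lambda>w. fst (f w)) z, deriv (\<lambda>w. snd (f w)) z)"

definition holo_disc :: "(complex \<Rightarrow> c2) \<Rightarrow> bool" where
  "holo_disc f \<longleftrightarrow> (\<lambda>w. fst (f w)) holomorphic_on disc \<and> (\<lambda>w. snd (f w)) holomorphic_on disc
     \<and> inj_on f disc \<and> (\<forall>z\<in>disc. dvec f z \<noteq> 0)"

definition compatible :: "(complex \<Rightarrow> c2) \<Rightarrow> (complex \<Rightarrow> c2) \<Rightarrow> bool" where
  "compatible f g \<longleftrightarrow> open {z\<in>disc. f z \<in> g ` disc} \<and> open {z\<in>disc. g z \<in> f ` disc}"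

definition flow_box :: "c2 set \<Rightarrow> (complex \<Rightarrow> c2) set \<Rightarrow> c2 \<Rightarrow> bool" where
  "flow_box Xl P p \<longleftrightarrow> (\<exists>U T \<phi> \<psi>. open U \<and> p \<in> U \<and> T \<subseteq> Xl \<inter> U
       \<and> homeomorphism (disc \<times> T) (Xl \<inter> U) (\<lambda>(z,t). \<phi> z t) \<psi>
       \<and> (\<forall>t\<in>T. \<phi> 0 t = t \<and> (\<lambda>z. \<phi> z t) \<in> P))"

definition lamination :: "c2 set \<Rightarrow> c2 set \<Rightarrow> (complex \<Rightarrow> c2) set \<Rightarrow> bool" where
  "lamination \<Lambda> Xl P \<longleftrightarrow> lattice \<Lambda> \<and> closed Xl
     \<and> (\<forall>a\<in>\<Lambda>. (\<lambda>q. q + a) ` Xl = Xl)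
     \<and> (\<forall>f\<in>P. holo_disc f \<and> f ` disc \<subseteq> Xl \<and> (\<forall>a\<in>\<Lambda>. (\<lambda>z. f z + a) \<in> P))
     \<and> (\<forall>f\<in>P. \<forall>g\<in>P. compatible f g)
     \<and> (\<forall>p\<in>Xl. flow_box Xl P p)"

definition same_plaque :: "(complex \<Rightarrow> c2) set \<Rightarrow> (c2 \<times> c2) set" where
  "same_plaque P = {(p,q). \<exists>f\<in>P. p \<in> f ` disc \<and> q \<in> f ` disc}"

definition leaf :: "(complex \<Rightarrow> c2) set \<Rightarrow> c2 \<Rightarrow> c2 set" where
  "leaf P p = {q. (p,q) \<in> (same_plaque P)\<^sup>*}"

text \<open>Minimal: the leaf of pi(p) in the torus, whose lift is the union of the Lambda-translates
of the lifted leaf through p, is dense in X.\<close>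
definition minimal_lamination :: "c2 set \<Rightarrow> c2 set \<Rightarrow> (complex \<Rightarrow> c2) set \<Rightarrow> bool" where
  "minimal_lamination \<Lambda> Xl P \<longleftrightarrow> lamination \<Lambda> Xl P \<and>
     (\<forall>p\<in>Xl. Xl \<subseteq> closure (\<Union>a\<in>\<Lambda>. (\<lambda>q. q + a) ` leaf P p))"

text \<open>The translation tau_v preserves the lamination: it preserves X and maps plaques to
discs compatible with all plaques (i.e. it maps leaves to leaves).\<close>
definition trans_invariant :: "c2 set \<Rightarrow> (complex \<Rightarrow> c2) set \<Rightarrow> c2 \<Rightarrow> bool" where
  "trans_invariant Xl P v \<longleftrightarrow> (\<lambda>q. q + v) ` Xl = Xl
     \<and> (\<forall>f\<in>P. \<forall>g\<in>P. compatible (\<lambda>z. f z + v) g)"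

text \<open>Tangent line at p is {0} \<times> C, i.e. the tangent vector has vanishing first component.\<close>
definition vertical :: "(complex \<Rightarrow> c2) set \<Rightarrow> c2 \<Rightarrow> bool" where
  "vertical P p \<longleftrightarrow> (\<exists>f\<in>P. \<exists>z\<in>disc. f z = p \<and> fst (dvec f z) = 0)"

definition horizontal :: "(complex \<Rightarrow> c2) set \<Rightarrow> c2 \<Rightarrow> bool" where
  "horizontal P p \<longleftrightarrow> (\<exists>f\<in>P. \<exists>z\<in>disc. f z = p \<and> snd (dvec f z) = 0)"

end

theory Submission
  imports Defs "HOL-Complex_Analysis.Complex_Analysis"
begin

lemma ident_const:
  assumes "g holomorphic_on disc" "open Oo" "Oo \<subseteq> disc" "w \<in> Oo" "\<forall>z\<in>Oo. g z = c" "z \<in> disc"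
  shows "g z = c"
proof -
  have "g z - c = 0"
  proof (rule analytic_continuation[of "\<lambda>z. g z - c" disc Oo w])
    show "(\<lambda>z. g z - c) holomorphic_on disc" using assms(1) by (intro holomorphic_intros)
    show "open disc" "connected disc" unfolding disc_def by auto
    show "w islimpt Oo" using assms(2,4) by (simp add: interior_limit_point interior_open)
  qed (use assms in auto)
  then show ?thesis by simp
qed

lemma const_prop:
  assumes lam: "lamination \<Lambda> Xl P" and f: "f\<in>P" "\<forall>z\<in>disc. fst (f z) = c"
    and g: "g\<in>P" "w\<in>disc" "g w \<in> f ` disc" and z: "z\<in>disc"
  shows "fst (g z) = c"
proof -
  have "compatible g f" using lam f g unfolding lamination_def by blast
  then have op: "open {x\<in>disc. g x \<in> f ` disc}" unfolding compatible_def by blast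
  have "holo_disc g" using lam g unfolding lamination_def by blast
  then have hol: "(\<lambda>x. fst (g x)) holomorphic_on disc" unfolding holo_disc_def by blast
  show ?thesis
  proof (rule ident_const[OF hol op _ _ _ z, of w])
    show "\<forall>x\<in>{x \<in> disc. g x \<in> f ` disc}. fst (g x) = c" using f by auto
  qed (use g in auto)
qed

lemma closure_vertical:
  assumes lam: "lamination \<Lambda> Xl P" and q: "q\<in>Xl" and qc: "q \<in> closure V" and VX: "V \<subseteq> Xl"
   and Vdef: "\<forall>y\<in>V. \<exists>f\<in>P. (\<exists>c. \<forall>z\<in>disc. fst (f z) = c) \<and> y \<in> f`disc"
  shows "vertical P q"
proof -
  have "flow_box Xl P q" using lam q unfolding lamination_def by blast
  then obtain U T \<phi> \<psi> where U: "open U" "q \<in> U" and TU: "T \<subseteq> Xl \<inter> U"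
    and hom: "homeomorphism (disc \<times> T) (Xl \<inter> U) (\<lambda>(z,t). \<phi> z t) \<psi>"
    and pl: "\<forall>t\<in>T. \<phi> 0 t = t \<and> (\<lambda>z. \<phi> z t) \<in> P"
    unfolding flow_box_def by blast
  define H where "H = (\<lambda>(z,t). \<phi> z t)"
  have H1: "\<forall>x\<in>disc \<times> T. \<psi> (H x) = x" and H2: "H ` (disc \<times> T) = Xl \<inter> U"
    and H3: "continuous_on (disc \<times> T) H" and H4: "\<forall>y\<in>Xl \<inter> U. H (\<psi> y) = y"
    and H5: "\<psi> ` (Xl \<inter> U) = disc \<times> T" and H6: "continuous_on (Xl \<inter> U) \<psi>"
    using hom unfolding homeomorphism_def H_def by auto
  obtain x where x: "\<forall>n. x n \<in> V" and xl: "x \<longlonglongrightarrow> q"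
    using qc closure_sequential by blast
  have "\<forall>\<^sub>F n in sequentially. x n \<in> U" using xl U by (rule topological_tendstoD)
  then obtain N where N: "\<forall>n\<ge>N. x n \<in> U" unfolding eventually_sequentially by blast
  define y where "y n = x (n+N)" for n
  have yl: "y \<longlonglongrightarrow> q" unfolding y_def using xl by (rule LIMSEQ_ignore_initial_segment)
  have yXU: "\<forall>n. y n \<in> Xl \<inter> U" using N x VX unfolding y_def by auto
  have yV: "\<forall>n. y n \<in> V" using x unfolding y_def by auto
  have qXU: "q \<in> Xl \<inter> U" using q U by auto
  have psil: "(\<psi> \<circ> y) \<longlonglongrightarrow> \<psi> q"
    using H6 qXU yXU yl unfolding continuous_on_sequentially by blast
  define wq where "wq = fst (\<psi> q)"
  define tq where "tq = snd (\<psi> q)"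
  have "\<psi> q \<in> disc \<times> T" using H5 qXU by blast
  then have wqtq: "(wq, tq) \<in> disc \<times> T" unfolding wq_def tq_def by simp
  have Hq: "\<phi> wq tq = q" using H4 qXU unfolding wq_def tq_def H_def by (metis case_prod_beta prod.collapse) 
  define t where "t n = snd (\<psi> (y n))" for n
  have tl: "t \<longlonglongrightarrow> tq" unfolding t_def tq_def using tendsto_snd[OF psil] by (simp add: o_def)
  have "\<psi> (y n) \<in> disc \<times> T" for n using H5 yXU by blast
  then have tT: "\<forall>n. t n \<in> T" unfolding t_def by (simp add: mem_Times_iff)
  have cst: "\<forall>z\<in>disc. fst (\<phi> z (t n)) = fst (\<phi> 0 (t n))" for n
  proof -
    obtain f c where f: "f \<in> P" "\<forall>z\<in>disc. fst (f z) = c" "y n \<in> f ` disc" using yV Vdef by blast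
    define s where "s = fst (\<psi> (y n))"
    have "\<psi> (y n) \<in> disc \<times> T" using H5 yXU by blast
    then have sd: "s \<in> disc" unfolding s_def by (simp add: mem_Times_iff)
    have ys: "\<phi> s (t n) = y n" using H4 yXU unfolding s_def t_def H_def by (metis case_prod_beta prod.collapse)
    have gP: "(\<lambda>z. \<phi> z (t n)) \<in> P" using pl tT by blast
    have 0: "0 \<in> disc" unfolding disc_def by simp
    have "fst (\<phi> z (t n)) = c" if "z \<in> disc" for z
      using const_prop[OF lam f(1,2) gP sd _ that] ys f(3) by simp
    then show ?thesis using 0 by auto
  qed
  have lim: "(\<lambda>n. \<phi> z (t n)) \<longlonglongrightarrow> \<phi> z tq" if "z \<in> disc" for z
  proof -
    have "(\<lambda>n. (z, t n)) \<longlonglongrightarrow> (z, tq)" using tl by (intro tendsto_intros)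
    then have "(H \<circ> (\<lambda>n. (z, t n))) \<longlonglongrightarrow> H (z, tq)"
      using H3 that wqtq tT unfolding continuous_on_sequentially by auto
    then show ?thesis unfolding H_def by (simp add: o_def)
  qed
  have eq: "fst (\<phi> z tq) = fst (\<phi> 0 tq)" if "z \<in> disc" for z
  proof -
    have 0: "0 \<in> disc" unfolding disc_def by simp
    have a: "(\<lambda>n. fst (\<phi> z (t n))) \<longlonglongrightarrow> fst (\<phi> z tq)" using lim[OF that] by (rule tendsto_fst)
    have b: "(\<lambda>n. fst (\<phi> z (t n))) \<longlonglongrightarrow> fst (\<phi> 0 tq)"
      using tendsto_fst[OF lim[OF 0]] cst that by simp
    show ?thesis using LIMSEQ_unique[OF a b] .
  qed
  have "((\<lambda>w. fst (\<phi> w tq)) has_field_derivative 0) (at wq)"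
  proof (rule has_field_derivative_transform_within_open[of "\<lambda>w. fst (\<phi> 0 tq)" 0 wq disc])
    show "((\<lambda>w. fst (\<phi> 0 tq)) has_field_derivative 0) (at wq)" by simp
    show "open disc" unfolding disc_def by simp
  qed (use wqtq eq in auto)
  then have "deriv (\<lambda>w. fst (\<phi> w tq)) wq = 0" by (rule DERIV_imp_deriv)
  then show ?thesis unfolding vertical_def dvec_def using pl wqtq Hq by force
qed

lemma hurwitz_step:
  fixes F :: "complex \<Rightarrow> complex" and a :: complex and \<epsilon> :: "nat \<Rightarrow> complex"
  assumes hol: "F holomorphic_on ball a (2*\<rho>)" and rp: "\<rho> > 0" and d0: "deriv F a = 0"
    and nc: "\<not> (deriv F) constant_on ball a \<rho>" and eps: "\<epsilon> \<longlonglongrightarrow> 0" "\<forall>n. \<epsilon> n \<noteq> 0"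
  shows "\<exists>n\<ge>N. \<exists>x\<in>ball a \<rho>. F x = F (x - \<epsilon> n)"
proof (rule ccontr)
  assume H: "\<not> ?thesis"
  have "\<forall>\<^sub>F n in sequentially. norm (\<epsilon> n) < \<rho>/2"
    using order_tendstoD(2)[OF tendsto_norm_zero[OF eps(1)], of "\<rho>/2"] rp by linarith
  then obtain N1 where N1: "\<forall>n\<ge>N1. norm (\<epsilon> n) < \<rho>/2" unfolding eventually_sequentially by blast
  define M where "M = max N N1"
  define e' where "e' n = \<epsilon> (n + M)" for n
  define G where "G n x = (F x - F (x - e' n)) / e' n" for n x
  have e'small: "norm (e' n) < \<rho>/2" for n using N1 unfolding e'_def M_def by simp
  have e'nz: "e' n \<noteq> 0" for n using eps(2) unfolding e'_def by simp
  have e'lim: "e' \<longlonglongrightarrow> 0" unfolding e'_def using eps(1) by (rule LIMSEQ_ignore_initial_segment)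
  have shift: "x - e' n \<in> ball a (2*\<rho>)" if "x \<in> ball a \<rho>" for x n
  proof -
    have "dist a (x - e' n) \<le> dist a x + dist x (x - e' n)" by (rule dist_triangle)
    also have "dist x (x - e' n) = norm (e' n)" by (simp add: dist_norm)
    finally have "dist a (x - e' n) \<le> dist a x + norm (e' n)" .
    moreover have "dist a x < \<rho>" using that by simp
    ultimately show ?thesis using e'small[of n] norm_ge_zero[of "e' n"] unfolding mem_ball by linarith
  qed
  have holF2: "F holomorphic_on ball a \<rho>" using hol by (rule holomorphic_on_subset) (use rp in auto)
  have holG: "G n holomorphic_on ball a \<rho>" for n
  proof -
    have i1: "(\<lambda>x. x - e' n) holomorphic_on ball a \<rho>" by (intro holomorphic_intros)
    have i2: "(\<lambda>x. x - e' n) ` ball a \<rho> \<subseteq> ball a (2*\<rho>)" using shift by blast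
    have "(\<lambda>x. F (x - e' n)) holomorphic_on ball a \<rho>"
      using holomorphic_on_compose_gen[OF i1 hol i2] by (simp add: o_def)
    then show ?thesis unfolding G_def using holF2 e'nz by (intro holomorphic_intros) auto
  qed
  have holD: "deriv F holomorphic_on ball a (2*\<rho>)" using hol by (intro holomorphic_deriv) auto
  have holD2: "deriv F holomorphic_on ball a \<rho>" using holD by (rule holomorphic_on_subset) (use rp in auto)
  have nz: "G n x \<noteq> 0" if "x \<in> ball a \<rho>" for n x
  proof
    assume "G n x = 0"
    then have "F x = F (x - \<epsilon> (n + M))" using e'nz[of n] unfolding G_def e'_def by simp
    moreover have "n + M \<ge> N" unfolding M_def by simp
    ultimately show False using H that by blast
  qed
  have ul: "uniform_limit (ball a \<rho>) G (deriv F) sequentially"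
  proof (rule uniform_limitI)
    fix e :: real assume e: "e > 0"
    define C where "C = cball a (3*\<rho>/2)"
    have CB: "C \<subseteq> ball a (2*\<rho>)" unfolding C_def using rp by auto
    have "continuous_on C (deriv F)"
      using holomorphic_on_imp_continuous_on[OF holD] CB by (rule continuous_on_subset)
    then have "uniformly_continuous_on C (deriv F)" unfolding C_def by (intro compact_uniformly_continuous) auto
    then obtain d where d: "d > 0" and dC: "\<forall>u\<in>C. \<forall>v\<in>C. dist v u < d \<longrightarrow> dist (deriv F v) (deriv F u) < e/2"
      unfolding uniformly_continuous_on_def using e by (meson half_gt_zero)
    have "\<forall>\<^sub>F n in sequentially. norm (e' n) < d"
      using order_tendstoD(2)[OF tendsto_norm_zero[OF e'lim]] d by simp
    then show "\<forall>\<^sub>F n in sequentially. \<forall>x\<in>ball a \<rho>. dist (G n x) (deriv F x) < e"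
    proof (rule eventually_mono)
      fix n assume nd: "norm (e' n) < d"
      show "\<forall>x\<in>ball a \<rho>. dist (G n x) (deriv F x) < e"
      proof
        fix x assume x: "x \<in> ball a \<rho>"
        define \<eta> where "\<eta> = e' n"
        define S' where "S' = cball x (norm \<eta>)"
        define \<zeta> where "\<zeta> u = F u - deriv F x * u" for u
        have S'C: "S' \<subseteq> C"
        proof
          fix u assume "u \<in> S'"
          then have "dist x u \<le> norm \<eta>" unfolding S'_def by simp
          moreover have "dist a u \<le> dist a x + dist x u" by (rule dist_triangle)
          ultimately show "u \<in> C" using x e'small[of n] unfolding C_def \<eta>_def by simp
        qed
        have xC: "x \<in> C" using x rp unfolding C_def by simp
        have der: "(\<zeta> has_field_derivative (deriv F u - deriv F x)) (at u within S')" if "u \<in> S'" for u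
        proof -
          have "(F has_field_derivative deriv F u) (at u within S')"
            using holomorphic_derivI[OF hol _ ] that S'C CB by auto
          then show ?thesis unfolding \<zeta>_def by (auto intro!: derivative_eq_intros)
        qed
        have bnd: "norm (deriv F u - deriv F x) \<le> e/2" if "u \<in> S'" for u
        proof -
          have "dist u x < d" using that nd unfolding S'_def \<eta>_def by (simp add: dist_commute)
          moreover have "u \<in> C" using S'C that by blast
          ultimately have "dist (deriv F u) (deriv F x) < e/2" using dC xC by blast
          then show ?thesis by (simp add: dist_norm)
        qed
        have xS: "x \<in> S'" "x - \<eta> \<in> S'" unfolding S'_def by (auto simp: dist_norm)
        have "norm (\<zeta> x - \<zeta> (x - \<eta>)) \<le> e/2 * norm (x - (x - \<eta>))"
          by (rule field_differentiable_bound[OF _ der bnd xS]) (auto simp: S'_def)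
        then have b: "norm (\<zeta> x - \<zeta> (x - \<eta>)) \<le> e/2 * norm \<eta>" by simp
        have hnz: "\<eta> \<noteq> 0" using e'nz unfolding \<eta>_def by simp
        have "G n x - deriv F x = (\<zeta> x - \<zeta> (x - \<eta>)) / \<eta>"
          unfolding G_def \<zeta>_def \<eta>_def using e'nz[of n] by (simp add: field_simps)
        then have "norm (G n x - deriv F x) = norm (\<zeta> x - \<zeta> (x - \<eta>)) / norm \<eta>" by (simp add: norm_divide)
        also have "\<dots> \<le> e/2" using b hnz by (simp add: divide_le_eq mult.commute)
        finally show "dist (G n x) (deriv F x) < e" using e by (simp add: dist_norm)
      qed
    qed
  qed
  have "deriv F a \<noteq> 0"
  proof (rule Hurwitz_no_zeros[of "ball a \<rho>" G "deriv F"])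
    show "uniform_limit K G (deriv F) sequentially" if "compact K" "K \<subseteq> ball a \<rho>" for K
      using ul that(2) by (rule uniform_limit_on_subset)
  qed (use holG holD2 nc nz rp in auto)
  then show False using d0 by simp
qed

lemma ball_shift:
  fixes x a \<eta> :: complex
  assumes "x \<in> ball a r" "norm \<eta> < s"
  shows "x - \<eta> \<in> ball a (r + s)" "x + \<eta> \<in> ball a (r + s)"
proof -
  have "dist a (x - \<eta>) \<le> dist a x + dist x (x - \<eta>)" by (rule dist_triangle)
  also have "dist x (x - \<eta>) = norm \<eta>" by (simp add: dist_norm)
  finally have "dist a (x - \<eta>) \<le> dist a x + norm \<eta>" .
  then show "x - \<eta> \<in> ball a (r + s)" using assms unfolding mem_ball by linarith
  have "dist a (x + \<eta>) \<le> dist a x + dist x (x + \<eta>)" by (rule dist_triangle)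
  also have "dist x (x + \<eta>) = norm \<eta>" by (simp add: dist_norm)
  finally have "dist a (x + \<eta>) \<le> dist a x + norm \<eta>" .
  then show "x + \<eta> \<in> ball a (r + s)" using assms unfolding mem_ball by linarith
qed

lemma vert_const:
  assumes lam: "lamination \<Lambda> Xl P" and eps: "\<epsilon> \<longlonglongrightarrow> 0" "\<forall>n. \<epsilon> n \<noteq> 0"
    "\<forall>n. trans_invariant Xl P (0, \<epsilon> n)"
    and f: "f\<in>P" "z0\<in>disc" "deriv (\<lambda>w. fst (f w)) z0 = 0"
  shows "\<forall>z\<in>disc. fst (f z) = fst (f z0)"
proof (rule ccontr)
  assume nconst: "\<not> (\<forall>z\<in>disc. fst (f z) = fst (f z0))"
  define f1 where "f1 = (\<lambda>w. fst (f w))"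
  define f2 where "f2 = (\<lambda>w. snd (f w))"
  have hd: "holo_disc f" and fX: "f ` disc \<subseteq> Xl" using lam f unfolding lamination_def by blast+
  have hol1: "f1 holomorphic_on disc" and hol2: "f2 holomorphic_on disc" and injf: "inj_on f disc"
    and dv: "dvec f z0 \<noteq> 0"
    using hd f unfolding holo_disc_def f1_def f2_def by blast+
  have od: "open disc" unfolding disc_def by simp
  have d1: "deriv f1 z0 = 0" using f(3) unfolding f1_def .
  have d2: "deriv f2 z0 \<noteq> 0" using dv d1 unfolding dvec_def f1_def f2_def by (auto simp: zero_prod_def)
  define p where "p = f z0"
  have pX: "p \<in> Xl" using fX f(2) unfolding p_def by blast
  have "flow_box Xl P p" using lam pX unfolding lamination_def by blast
  then obtain U T \<phi> \<psi> where U: "open U" "p \<in> U" and TU: "T \<subseteq> Xl \<inter> U"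
    and hom: "homeomorphism (disc \<times> T) (Xl \<inter> U) (\<lambda>(z,t). \<phi> z t) \<psi>"
    and pl: "\<forall>t\<in>T. \<phi> 0 t = t \<and> (\<lambda>z. \<phi> z t) \<in> P"
    unfolding flow_box_def by blast
  define H where "H = (\<lambda>(z,t). \<phi> z t)"
  have H1: "\<forall>x\<in>disc \<times> T. \<psi> (H x) = x" and H2: "H ` (disc \<times> T) = Xl \<inter> U"
    and H3: "continuous_on (disc \<times> T) H" and H4: "\<forall>y\<in>Xl \<inter> U. H (\<psi> y) = y"
    and H5: "\<psi> ` (Xl \<inter> U) = disc \<times> T" and H6: "continuous_on (Xl \<inter> U) \<psi>"
    using hom unfolding homeomorphism_def H_def by auto
  have pXU: "p \<in> Xl \<inter> U" using pX U by simp
  define w0 where "w0 = fst (\<psi> p)"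
  define t0 where "t0 = snd (\<psi> p)"
  have "\<psi> p \<in> disc \<times> T" using H5 pXU by blast
  then have w0t0: "w0 \<in> disc" "t0 \<in> T" unfolding w0_def t0_def by (auto simp: mem_Times_iff)
  have psip: "\<psi> p = (w0, t0)" unfolding w0_def t0_def by simp
  have phip: "\<phi> w0 t0 = p" using H4 pXU psip unfolding H_def by (metis case_prod_conv)
  define g0 where "g0 = (\<lambda>z. \<phi> z t0)"
  have g0P: "g0 \<in> P" using pl w0t0 unfolding g0_def by blast
  have g0X: "g0 \<sigma> \<in> Xl \<inter> U" if "\<sigma> \<in> disc" for \<sigma>
  proof -
    have "H (\<sigma>, t0) \<in> Xl \<inter> U" using H2 that w0t0 by blast
    then show ?thesis unfolding H_def g0_def by simp
  qed
  have psig: "\<psi> (g0 \<sigma>) = (\<sigma>, t0)" if "\<sigma> \<in> disc" for \<sigma>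
    using H1 that w0t0 unfolding H_def g0_def by force
  define Bset where "Bset = {z\<in>disc. f z \<in> g0 ` disc}"
  have "compatible f g0" using lam f(1) g0P unfolding lamination_def by blast
  then have oB: "open Bset" unfolding compatible_def Bset_def by blast
  have z0B: "z0 \<in> Bset" unfolding Bset_def using f(2) w0t0 phip unfolding p_def g0_def by force
  have hol2B: "f2 holomorphic_on Bset" using hol2 by (rule holomorphic_on_subset) (auto simp: Bset_def)
  obtain r1 where r1: "r1 > 0" "ball z0 r1 \<subseteq> Bset" "inj_on f2 (ball z0 r1)"
    using has_complex_derivative_locally_injective[OF hol2B z0B oB d2] by blast
  define N where "N = ball z0 r1"
  have NB: "N \<subseteq> Bset" using r1 unfolding N_def by simp
  have Nd: "N \<subseteq> disc" using NB unfolding Bset_def by blast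
  have z0N: "z0 \<in> N" using r1 unfolding N_def by simp
  have hol2N: "f2 holomorphic_on N" using hol2 Nd by (rule holomorphic_on_subset)
  have injN: "inj_on f2 N" using r1 unfolding N_def by simp
  have oN: "open N" unfolding N_def by simp
  obtain h where hh: "h holomorphic_on f2 ` N" and hinv: "\<And>z. z \<in> N \<Longrightarrow> h (f2 z) = z"
    using holomorphic_has_inverse[OF hol2N oN injN] by blast
  define M where "M = f2 ` N"
  have oM: "open M" unfolding M_def using open_mapping_thm3[OF hol2N oN injN] by simp
  define p2 where "p2 = f2 z0"
  have p2M: "p2 \<in> M" unfolding M_def p2_def using z0N by blast
  have hM: "h y \<in> N \<and> f2 (h y) = y" if "y \<in> M" for y using that hinv unfolding M_def by auto
  have holh: "h holomorphic_on M" using hh unfolding M_def .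
  define F where "F = (\<lambda>x. f1 (h x))"
  have holF: "F holomorphic_on M"
  proof -
    have "h ` M \<subseteq> disc" using hM Nd by blast
    then show ?thesis using holomorphic_on_compose_gen[OF holh hol1] unfolding F_def by (simp add: o_def)
  qed
  have f1F: "f1 z = F (f2 z)" if "z \<in> N" for z using hinv[OF that] unfolding F_def by simp
  have hp2: "h p2 = z0" unfolding p2_def using hinv z0N by simp
  have dF0: "deriv F p2 = 0"
  proof -
    have a: "h field_differentiable at p2" using holomorphic_on_imp_differentiable_at[OF holh oM p2M] .
    have b: "f1 field_differentiable at (h p2)" using holomorphic_on_imp_differentiable_at[OF hol1 od] hp2 f(2) by simp
    have "deriv (f1 \<circ> h) p2 = deriv f1 (h p2) * deriv h p2" by (rule deriv_chain[OF a b])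
    then show ?thesis unfolding F_def using hp2 d1 by (simp add: o_def)
  qed
  have fpair: "f = (\<lambda>z. (f1 z, f2 z))" unfolding f1_def f2_def by simp
  have fcont: "continuous_on disc f"
    using holomorphic_on_imp_continuous_on[OF hol1] holomorphic_on_imp_continuous_on[OF hol2]
    by (subst fpair) (rule continuous_on_Pair)
  have hcont: "continuous_on M h" using holomorphic_on_imp_continuous_on[OF holh] .
  have f2cont: "continuous_on N f2" using holomorphic_on_imp_continuous_on[OF hol2N] .
  define tau where "tau z = fst (\<psi> (f z))" for z
  have psif: "\<psi> (f z) = (tau z, t0) \<and> tau z \<in> disc \<and> f z \<in> Xl \<inter> U" if zN: "z \<in> N" for z
  proof -
    obtain \<sigma> where s: "\<sigma> \<in> disc" "f z = g0 \<sigma>" using NB zN unfolding Bset_def by blast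
    then show ?thesis using psig[OF s(1)] g0X[OF s(1)] unfolding tau_def by simp
  qed
  have taucont: "continuous_on N tau"
  proof -
    have "continuous_on N f" using fcont Nd by (rule continuous_on_subset)
    moreover have "continuous_on (f ` N) \<psi>" using H6 by (rule continuous_on_subset) (use psif in blast)
    ultimately have "continuous_on N (\<psi> \<circ> f)" by (rule continuous_on_compose)
    then show ?thesis unfolding tau_def o_def by (intro continuous_on_fst)
  qed
  have tauinj: "inj_on tau N"
  proof (rule inj_onI)
    fix z z' assume zz: "z \<in> N" "z' \<in> N" "tau z = tau z'"
    then have "\<psi> (f z) = \<psi> (f z')" using psif by simp
    then have "H (\<psi> (f z)) = H (\<psi> (f z'))" by simp
    then have "f z = f z'" using H4 psif zz by metis
    then show "z = z'" using injf zz Nd by (meson inj_onD subsetD)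
  qed
  have otau: "open (tau ` N)" using invariance_of_domain[OF taucont oN tauinj] by simp
  have w0tau: "w0 \<in> tau ` N" using z0N psip unfolding tau_def p_def by force
  obtain \<delta>' where \<delta>': "\<delta>' > 0" "ball w0 \<delta>' \<subseteq> tau ` N" using otau w0tau open_contains_ball by blast
  obtain e1 where e1: "e1 > 0" "\<forall>y\<in>Xl \<inter> U. dist y p < e1 \<longrightarrow> dist (\<psi> y) (\<psi> p) < \<delta>'"
    using H6 pXU \<delta>'(1) unfolding continuous_on_iff by blast
  obtain e2 where e2: "e2 > 0" "ball p e2 \<subseteq> U" using U open_contains_ball by blast
  define e where "e = min e1 e2"
  have e0: "e > 0" unfolding e_def using e1 e2 by simp
  have claim4: "\<exists>z\<in>N. f z = y" if yg: "y \<in> g0 ` disc" and yd: "dist y p < e" for y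
  proof -
    obtain \<sigma> where s: "\<sigma> \<in> disc" "y = g0 \<sigma>" using yg by blast
    have yXU: "y \<in> Xl \<inter> U" using g0X s by simp
    have "dist (\<psi> y) (\<psi> p) < \<delta>'" using e1 yXU yd unfolding e_def by simp
    moreover have "dist \<sigma> w0 \<le> dist (\<psi> y) (\<psi> p)" using dist_fst_le[of "\<psi> y" "\<psi> p"] psig[OF s(1)] s(2) psip by simp
    ultimately have "\<sigma> \<in> ball w0 \<delta>'" by (simp add: dist_commute)
    then obtain z where z: "z \<in> N" "\<sigma> = tau z" using \<delta>'(2) by blast
    have "\<psi> (f z) = \<psi> y" using psif[OF z(1)] psig[OF s(1)] s(2) z(2) by simp
    then have "H (\<psi> (f z)) = H (\<psi> y)" by simp
    then have "f z = y" using H4 psif[OF z(1)] yXU by metis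
    then show ?thesis using z by blast
  qed
  have fhcont: "continuous_on M (f \<circ> h)"
  proof (rule continuous_on_compose[OF hcont])
    show "continuous_on (h ` M) f" using fcont by (rule continuous_on_subset) (use hM Nd in blast)
  qed
  obtain \<rho>1 where \<rho>1: "\<rho>1 > 0" "\<forall>x\<in>M. dist x p2 < \<rho>1 \<longrightarrow> dist ((f \<circ> h) x) ((f \<circ> h) p2) < e/2"
    using fhcont p2M e0 unfolding continuous_on_iff by (meson half_gt_zero)
  obtain \<rho>2 where \<rho>2: "\<rho>2 > 0" "ball p2 \<rho>2 \<subseteq> M" using oM p2M open_contains_ball by blast
  define \<rho> where "\<rho> = min \<rho>1 \<rho>2 / 2"
  have \<rho>0: "\<rho> > 0" unfolding \<rho>_def using \<rho>1 \<rho>2 by simp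
  have ballM: "ball p2 (2*\<rho>) \<subseteq> M" using \<rho>2 unfolding \<rho>_def by auto
  have ballM1: "ball p2 \<rho> \<subseteq> M" using ballM \<rho>0 by auto
  have fhnear: "dist (f (h x)) p < e/2" if "x \<in> ball p2 (2*\<rho>)" for x
  proof -
    have "dist p2 x < 2*\<rho>" using that by simp
    moreover have "2*\<rho> \<le> \<rho>1" unfolding \<rho>_def by simp
    ultimately have "dist x p2 < \<rho>1" by (simp add: dist_commute)
    moreover have "x \<in> M" using that ballM by blast
    ultimately have "dist ((f \<circ> h) x) ((f \<circ> h) p2) < e/2" using \<rho>1(2) by blast
    then show ?thesis using hp2 unfolding p_def by simp
  qed
  have ncD: "\<not> (deriv F) constant_on ball p2 \<rho>"
  proof
    assume "(deriv F) constant_on ball p2 \<rho>"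
    then obtain c where c: "\<forall>x\<in>ball p2 \<rho>. deriv F x = c" unfolding constant_on_def by blast
    have "p2 \<in> ball p2 \<rho>" using \<rho>0 by simp
    then have "c = 0" using c dF0 by simp
    then have c0: "\<forall>x\<in>ball p2 \<rho>. deriv F x = 0" using c by simp
    have "\<exists>c. \<forall>x\<in>ball p2 \<rho>. F x = c"
    proof (rule has_field_derivative_zero_constant)
      fix x assume x: "x \<in> ball p2 \<rho>"
      have "(F has_field_derivative deriv F x) (at x within ball p2 \<rho>)"
        using holomorphic_derivI[OF holF oM] x ballM1 by blast
      then show "(F has_field_derivative 0) (at x within ball p2 \<rho>)" using c0 x by simp
    qed simp
    then obtain c' where c': "\<forall>x\<in>ball p2 \<rho>. F x = c'" by blast
    define Oo where "Oo = N \<inter> f2 -` ball p2 \<rho>"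
    have oO: "open Oo" unfolding Oo_def using continuous_open_preimage[OF f2cont oN] by simp
    have z0O: "z0 \<in> Oo" unfolding Oo_def p2_def using z0N \<rho>0 by simp
    have "\<forall>z\<in>Oo. f1 z = c'" using c' f1F unfolding Oo_def by auto
    then have "\<forall>z\<in>disc. f1 z = c'" using ident_const[OF hol1 oO _ z0O] Nd unfolding Oo_def by blast
    then show False using nconst f(2) unfolding f1_def by auto
  qed
  have holDF: "deriv F holomorphic_on ball p2 \<rho>"
    using holomorphic_deriv[OF holF oM] ballM1 by (rule holomorphic_on_subset)
  have "\<exists>\<rho>0>0. \<forall>x\<in>ball p2 \<rho>0. x \<noteq> p2 \<longrightarrow> deriv F x \<noteq> 0"
  proof (rule ccontr)
    assume A0: "\<not> ?thesis"
    have A: "\<forall>r>0. \<exists>x\<in>ball p2 r. x \<noteq> p2 \<and> deriv F x = 0" using A0 by blast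
    define Z where "Z = {x\<in>ball p2 \<rho>. deriv F x = 0}"
    have "p2 islimpt Z"
    proof (unfold islimpt_approachable, intro allI impI)
      fix d :: real assume d: "d > 0"
      have "min d \<rho> > 0" using d \<rho>0 by simp
      then obtain x where "x \<in> ball p2 (min d \<rho>)" "x \<noteq> p2" "deriv F x = 0" using A by blast
      then show "\<exists>x'\<in>Z. x' \<noteq> p2 \<and> dist x' p2 < d" unfolding Z_def by (auto simp: dist_commute)
    qed
    have "\<forall>w\<in>ball p2 \<rho>. deriv F w = 0"
    proof
      fix w assume w: "w \<in> ball p2 \<rho>"
      show "deriv F w = 0"
      proof (rule analytic_continuation[OF holDF _ _ _ _ \<open>p2 islimpt Z\<close> _ w])
        show "Z \<subseteq> ball p2 \<rho>" unfolding Z_def by blast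
        show "p2 \<in> ball p2 \<rho>" using \<rho>0 by simp
        show "\<And>z. z \<in> Z \<Longrightarrow> deriv F z = 0" unfolding Z_def by blast
      qed auto
    qed
    then show False using ncD unfolding constant_on_def by blast
  qed
  then obtain \<rho>0 where r0: "\<rho>0 > 0" "\<forall>x\<in>ball p2 \<rho>0. x \<noteq> p2 \<longrightarrow> deriv F x \<noteq> 0" by blast
  define m where "m = min \<rho>0 (min \<rho> (e/2))"
  have m0: "m > 0" unfolding m_def using r0 \<rho>0 e0 by simp
  have "\<forall>\<^sub>F n in sequentially. norm (\<epsilon> n) < m"
    using order_tendstoD(2)[OF tendsto_norm_zero[OF eps(1)], of m] m0 by blast
  then obtain N0 where N0: "\<forall>n\<ge>N0. norm (\<epsilon> n) < m" unfolding eventually_sequentially by blast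
  have holF2: "F holomorphic_on ball p2 (2*\<rho>)" using holF ballM by (rule holomorphic_on_subset)
  obtain n xs where n: "n \<ge> N0" and xs: "xs \<in> ball p2 \<rho>" "F xs = F (xs - \<epsilon> n)"
    using hurwitz_step[OF holF2 \<rho>0 dF0 ncD eps(1,2), of N0] by blast
  define \<eta> where "\<eta> = \<epsilon> n"
  have \<eta>m: "norm \<eta> < \<rho>0" "norm \<eta> < \<rho>" "norm \<eta> < e/2" using N0 n unfolding \<eta>_def m_def by auto
  have \<eta>nz: "\<eta> \<noteq> 0" using eps(2) unfolding \<eta>_def by simp
  define a where "a = xs - \<eta>"
  have rr: "\<rho> + \<rho> = 2*\<rho>" by simp
  have aB: "a \<in> ball p2 (2*\<rho>)" unfolding a_def using ball_shift(1)[OF xs(1) \<eta>m(2)] rr by (simp only:)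
  have aM: "a \<in> M" using aB ballM by blast
  have xsM: "xs \<in> M" using xs(1) ballM1 by blast
  define zs where "zs = h a"
  have zsN: "zs \<in> N" unfolding zs_def using hM aM by blast
  have eqv: "f zs + (0, \<eta>) = f (h xs)"
  proof -
    have 1: "fst (f zs) = F a" unfolding zs_def F_def f1_def by simp
    have 2: "snd (f zs) = a" using hM[OF aM] unfolding zs_def f2_def by simp
    have 3: "fst (f (h xs)) = F xs" unfolding F_def f1_def by simp
    have 4: "snd (f (h xs)) = xs" using hM[OF xsM] unfolding f2_def by simp
    show ?thesis using 1 2 3 4 xs(2) unfolding a_def \<eta>_def by (simp add: prod_eq_iff)
  qed
  have fhxs: "f (h xs) \<in> g0 ` disc" using hM[OF xsM] NB unfolding Bset_def by blast
  define Sset where "Sset = {z\<in>disc. f z + (0, \<eta>) \<in> g0 ` disc}"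
  have "compatible (\<lambda>z. f z + (0, \<eta>)) g0" using eps(3) f(1) g0P unfolding trans_invariant_def \<eta>_def by blast
  then have oS: "open Sset" unfolding compatible_def Sset_def by simp
  have zsS: "zs \<in> Sset" unfolding Sset_def using zsN Nd eqv fhxs by auto
  obtain \<eta>' where \<eta>': "\<eta>' > 0" "ball zs \<eta>' \<subseteq> Sset" using oS zsS open_contains_ball by blast
  define Q where "Q = ball p2 (2*\<rho>) \<inter> h -` ball zs \<eta>'"
  have oQ: "open Q" unfolding Q_def
    using continuous_open_preimage[OF continuous_on_subset[OF hcont ballM]] by simp
  have aQ: "a \<in> Q" unfolding Q_def using aB \<eta>' zs_def by simp
  have keyQ: "F (y + \<eta>) = F y" if yQ: "y \<in> Q" for y
  proof -
    have yB: "y \<in> ball p2 (2*\<rho>)" and yS: "h y \<in> Sset" using yQ \<eta>' unfolding Q_def by auto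
    have yM: "y \<in> M" using yB ballM by blast
    define z where "z = h y"
    have zN: "z \<in> N" and f2z: "f2 z = y" using hM[OF yM] unfolding z_def by auto
    have zg: "f z + (0, \<eta>) \<in> g0 ` disc" using yS unfolding Sset_def z_def by simp
    have "dist (f z + (0, \<eta>)) p \<le> dist (f z) p + norm \<eta>"
    proof -
      have "dist (f z + (0, \<eta>)) p = norm ((f z - p) + (0, \<eta>))" by (simp add: dist_norm algebra_simps)
      also have "\<dots> \<le> norm (f z - p) + norm ((0::complex), \<eta>)" by (rule norm_triangle_ineq)
      also have "norm ((0::complex), \<eta>) = norm \<eta>" by (simp add: norm_Pair)
      finally show ?thesis by (simp add: dist_norm)
    qed
    moreover have "dist (f z) p < e/2" using fhnear[OF yB] unfolding z_def .
    ultimately have "dist (f z + (0, \<eta>)) p < e" using \<eta>m(3) by simp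
    then obtain z' where z': "z' \<in> N" "f z' = f z + (0, \<eta>)" using claim4 zg by blast
    have "f1 z' = f1 z" "f2 z' = f2 z + \<eta>" using z'(2) unfolding f1_def f2_def by auto
    then show ?thesis using f1F[OF z'(1)] f1F[OF zN] f2z by simp
  qed
  define Oo where "Oo = ball p2 \<rho> \<inter> (\<lambda>x. x - \<eta>) -` Q"
  have oO: "open Oo" unfolding Oo_def
    using continuous_open_preimage[of "ball p2 \<rho>" "\<lambda>x. x - \<eta>" Q] oQ by (simp add: continuous_intros)
  have xsO: "xs \<in> Oo" unfolding Oo_def using xs(1) aQ a_def by simp
  define K where "K x = F x - F (x - \<eta>)" for x
  have shiftB: "x - \<eta> \<in> ball p2 (2*\<rho>)" if "x \<in> ball p2 \<rho>" for x
    using ball_shift(1)[OF that \<eta>m(2)] rr by (simp only:)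
  have holK: "K holomorphic_on ball p2 \<rho>"
  proof -
    have i1: "(\<lambda>x. x - \<eta>) holomorphic_on ball p2 \<rho>" by (intro holomorphic_intros)
    have i2: "(\<lambda>x. x - \<eta>) ` ball p2 \<rho> \<subseteq> ball p2 (2*\<rho>)" using shiftB by blast
    have "(\<lambda>x. F (x - \<eta>)) holomorphic_on ball p2 \<rho>"
      using holomorphic_on_compose_gen[OF i1 holF2 i2] by (simp add: o_def)
    then show ?thesis unfolding K_def using holF ballM1
      by (intro holomorphic_intros) (auto intro: holomorphic_on_subset)
  qed
  have K0: "\<forall>w\<in>ball p2 \<rho>. K w = 0"
  proof
    fix w assume w: "w \<in> ball p2 \<rho>"
    show "K w = 0"
    proof (rule analytic_continuation[OF holK _ _ _ _ _ _ w, of Oo xs])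
      show "xs islimpt Oo" using oO xsO by (simp add: interior_limit_point interior_open)
      show "\<And>z. z \<in> Oo \<Longrightarrow> K z = 0"
      proof -
        fix z assume "z \<in> Oo"
        then have "z - \<eta> \<in> Q" unfolding Oo_def by simp
        from keyQ[OF this] show "K z = 0" unfolding K_def by simp
      qed
    qed (use xs(1) Oo_def in auto)
  qed
  define q where "q = p2 + \<eta>"
  have qB: "q \<in> ball p2 \<rho>" unfolding q_def using \<eta>m(2) by (simp add: dist_norm)
  have qM: "q \<in> M" using qB ballM1 by blast
  have "(K has_field_derivative (deriv F q - deriv F (q - \<eta>) * 1)) (at q)"
  proof -
    have a1: "(F has_field_derivative deriv F q) (at q)" using holomorphic_derivI[OF holF oM qM] .
    have "q - \<eta> \<in> M" unfolding q_def using p2M by simp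
    then have a2: "(F has_field_derivative deriv F (q - \<eta>)) (at (q - \<eta>))" using holomorphic_derivI[OF holF oM] by blast
    have a3: "((\<lambda>x. x - \<eta>) has_field_derivative 1) (at q)" by (auto intro!: derivative_eq_intros)
    have "((\<lambda>x. F (x - \<eta>)) has_field_derivative deriv F (q - \<eta>) * 1) (at q)"
      by (rule DERIV_chain2[OF a2 a3])
    then show ?thesis unfolding K_def using a1 by (intro DERIV_diff) auto
  qed
  moreover have "(K has_field_derivative 0) (at q)"
  proof (rule has_field_derivative_transform_within_open[of "\<lambda>x. 0" 0 q "ball p2 \<rho>"])
  qed (use qB K0 in auto)
  ultimately have "deriv F q - deriv F (q - \<eta>) * 1 = 0" by (rule DERIV_unique)
  then have "deriv F q = 0" unfolding q_def using dF0 by simp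
  moreover have "q \<in> ball p2 \<rho>0" "q \<noteq> p2" unfolding q_def using \<eta>m(1) \<eta>nz by (auto simp: dist_norm)
  ultimately show False using r0(2) by blast
qed

theorem proposition3p1:
  fixes \<Lambda> Xl :: "c2 set" and P :: "(complex \<Rightarrow> c2) set" and \<epsilon> :: "nat \<Rightarrow> complex"
  assumes "minimal_lamination \<Lambda> Xl P"
    and "\<epsilon> \<longlonglongrightarrow> 0" and "\<forall>n. \<epsilon> n \<noteq> 0"
    and "\<forall>n. trans_invariant Xl P (0, \<epsilon> n)"
  shows "(\<forall>p\<in>Xl. vertical P p) \<or> (\<forall>p\<in>Xl. \<not> vertical P p)"
proof (rule disjCI)
  assume "\<not> (\<forall>p\<in>Xl. \<not> vertical P p)"
  then obtain p f z0 where p: "p \<in> Xl" and f: "f \<in> P" "z0 \<in> disc" "f z0 = p"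
    "deriv (\<lambda>w. fst (f w)) z0 = 0"
    unfolding vertical_def dvec_def by auto
  have lam: "lamination \<Lambda> Xl P" using assms(1) unfolding minimal_lamination_def by blast
  have fc: "\<forall>z\<in>disc. fst (f z) = fst (f z0)" using vert_const[OF lam assms(2-4) f(1,2,4)] .
  define V where "V = {y. \<exists>f\<in>P. (\<exists>c. \<forall>z\<in>disc. fst (f z) = c) \<and> y \<in> f`disc}"
  have VX: "V \<subseteq> Xl" using lam unfolding V_def lamination_def by blast
  have Vdef: "\<forall>y\<in>V. \<exists>f\<in>P. (\<exists>c. \<forall>z\<in>disc. fst (f z) = c) \<and> y \<in> f`disc" unfolding V_def by blast
  have pV: "p \<in> V" unfolding V_def using f fc by blast
  have leafV: "leaf P p \<subseteq> V"
  proof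
    fix y assume "y \<in> leaf P p"
    then have "(p, y) \<in> (same_plaque P)\<^sup>*" unfolding leaf_def by simp
    then show "y \<in> V"
    proof (induction rule: rtrancl_induct)
      case base then show ?case using pV .
    next
      case (step a b)
      then obtain g where g: "g \<in> P" "a \<in> g ` disc" "b \<in> g ` disc" unfolding same_plaque_def by blast
      obtain h c where h: "h \<in> P" "\<forall>z\<in>disc. fst (h z) = c" "a \<in> h ` disc" using step.IH unfolding V_def by blast
      obtain w where w: "w \<in> disc" "a = g w" using g by blast
      have "\<forall>z\<in>disc. fst (g z) = c" using const_prop[OF lam h(1,2) g(1) w(1)] w h(3) by simp
      then show ?case unfolding V_def using g by blast
    qed
  qed
  have transV: "y + a \<in> V" if yV: "y \<in> V" and aL: "a \<in> \<Lambda>" for y a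
  proof -
    obtain h c where h: "h \<in> P" "\<forall>z\<in>disc. fst (h z) = c" "y \<in> h ` disc" using yV unfolding V_def by blast
    have "(\<lambda>z. h z + a) \<in> P" using lam h(1) aL unfolding lamination_def by blast
    moreover have "\<forall>z\<in>disc. fst (h z + a) = c + fst a" using h(2) by simp
    moreover have "y + a \<in> (\<lambda>z. h z + a) ` disc" using h(3) by blast
    ultimately show ?thesis unfolding V_def
      by (intro CollectI bexI[of _ "\<lambda>z. h z + a"] conjI exI[of _ "c + fst a"]) auto
  qed
  have "(\<Union>a\<in>\<Lambda>. (\<lambda>q. q + a) ` leaf P p) \<subseteq> V" using leafV transV by blast
  then have "Xl \<subseteq> closure V"
    using assms(1) p unfolding minimal_lamination_def by (meson closure_mono subset_trans)
  then show "\<forall>p\<in>Xl. vertical P p" using closure_vertical[OF lam _ _ VX Vdef] by blast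
qed

end
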